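(* Let $S[1..n]$ be a string over $\Sigma=\{1,\ldots,\sigma\}$, and suppose its rank array and lcp array are given. Then for any position interval $[x..y]$ with $1\le x\le y\le n$, one can find $\mathrm{LR}_x^y$ or determine that it does not exist using $O(x)$ time and $O(n)$ space. If there are multiple choices for $\mathrm{LR}_x^y$, the leftmost one is returned.
   Context: For $1\le i\le j\le n$, $S[i..j]=S[i]\cdots S[j]$. A substring $S[i..j]$ covers $[x..y]$ if $i\le x\le y\le j$. A substring is unique if it has no other occurrence starting at a different position; it is a repeat otherwise. $\mathrm{LR}_x^y$ is a repeat $S[i..j]$ covering $[x..y]$ such that no repeat $S[i'..j']$ covering $[x..y]$ has $j'-i'>j-i$. The suffix array $SA[1..n]$ is the permutation of $\{1,\ldots,n\}$ such that $S[SA[1]..n]<S[SA[2]..n]<\cdots$ in lexicographic order (a proper prefix is smaller). The rank array is its inverse: $\mathrm{Rank}[i]=j$ iff $SA[j]=i$. The lcp array $\mathrm{LCP}[1..n+1]$ has $\mathrm{LCP}[1]=\mathrm{LCP}[n+1]=0$ and, for $2\le i\le n$, $\mathrm{LCP}[i]$ is the length of the longest common prefix of $S[SA[i-1]..n]$ and $S[SA[i]..n]$. Complexity is in the word-RAM model with each integer in $\{0,\ldots,n+1\}$ occupying a constant number of words. *)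

theory Defs
  imports Main
begin

text \<open>A string S[1..n] is a list of length n; position i (1-based) is S ! (i - 1).\<close>

definition substr :: "nat list \<Rightarrow> nat \<Rightarrow> nat \<Rightarrow> nat list" where
  "substr S i j = take (Suc j - i) (drop (i - 1) S)"

definition suffix_at :: "nat list \<Rightarrow> nat \<Rightarrow> nat list" where
  "suffix_at S i = drop (i - 1) S"

definition occurs_at :: "nat list \<Rightarrow> nat list \<Rightarrow> nat \<Rightarrow> bool" where
  "occurs_at S w p \<longleftrightarrow> 1 \<le> p \<and> p + length w \<le> Suc (length S) \<and> take (length w) (drop (p - 1) S) = w"

definition is_repeat :: "nat list \<Rightarrow> nat \<Rightarrow> nat \<Rightarrow> bool" where
  "is_repeat S i j \<longleftrightarrow> 1 \<le> i \<and> i \<le> j \<and> j \<le> length S \<and>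
     (\<exists>p. p \<noteq> i \<and> occurs_at S (substr S i j) p)"

definition covers :: "nat \<Rightarrow> nat \<Rightarrow> nat \<Rightarrow> nat \<Rightarrow> bool" where
  "covers i j x y \<longleftrightarrow> i \<le> x \<and> x \<le> y \<and> y \<le> j"

definition is_LR :: "nat list \<Rightarrow> nat \<Rightarrow> nat \<Rightarrow> nat \<Rightarrow> nat \<Rightarrow> bool" where
  "is_LR S x y i j \<longleftrightarrow> is_repeat S i j \<and> covers i j x y \<and>
     (\<forall>i' j'. is_repeat S i' j' \<and> covers i' j' x y \<longrightarrow> j' - i' \<le> j - i)"

definition is_leftmost_LR :: "nat list \<Rightarrow> nat \<Rightarrow> nat \<Rightarrow> nat \<Rightarrow> nat \<Rightarrow> bool" where
  "is_leftmost_LR S x y i j \<longleftrightarrow> is_LR S x y i j \<and> (\<forall>i' j'. is_LR S x y i' j' \<longrightarrow> i \<le> i')"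

text \<open>Lexicographic order in which a proper prefix is smaller (Main's lexord).\<close>
definition lex_less :: "nat list \<Rightarrow> nat list \<Rightarrow> bool" where
  "lex_less u v \<longleftrightarrow> (u, v) \<in> lexord {(a, b). a < b}"

definition is_SA :: "nat list \<Rightarrow> (nat \<Rightarrow> nat) \<Rightarrow> bool" where
  "is_SA S SA \<longleftrightarrow> bij_betw SA {1..length S} {1..length S} \<and>
     (\<forall>a b. 1 \<le> a \<and> a < b \<and> b \<le> length S \<longrightarrow>
        lex_less (suffix_at S (SA a)) (suffix_at S (SA b)))"

definition is_rank_array :: "nat list \<Rightarrow> (nat \<Rightarrow> nat) \<Rightarrow> (nat \<Rightarrow> nat) \<Rightarrow> bool" where
  "is_rank_array S SA Rank \<longleftrightarrow>
     (\<forall>i\<in>{1..length S}. \<forall>j\<in>{1..length S}. Rank i = j \<longleftrightarrow> SA j = i)"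

fun lcp :: "nat list \<Rightarrow> nat list \<Rightarrow> nat" where
  "lcp (a # u) (b # v) = (if a = b then Suc (lcp u v) else 0)"
| "lcp _ _ = 0"

definition is_lcp_array :: "nat list \<Rightarrow> (nat \<Rightarrow> nat) \<Rightarrow> (nat \<Rightarrow> nat) \<Rightarrow> bool" where
  "is_lcp_array S SA L \<longleftrightarrow> L 1 = 0 \<and> L (Suc (length S)) = 0 \<and>
     (\<forall>i\<in>{2..length S}. L i = lcp (suffix_at S (SA (i - 1))) (suffix_at S (SA i)))"

text \<open>
  Programs operate on finitely many registers (indices are constants of the program text),
  a zero-initialised working memory (nat \<Rightarrow> nat), and three read-only input arrays
  S[1..n], Rank[1..n], LCP[1..n+1].
  Every value written to a register or memory cell must be smaller than the word bound W
  (W = (n + sigma + 2)^k for a program-specific constant k, i.e. words of O(log n) bits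
  for polynomially bounded alphabets); otherwise, and on out-of-range input reads, the
  machine faults.
\<close>

datatype aop = Plus | Minus | Times | Divide | Modulo | Less | Eq

datatype instr =
    LoadConst nat nat
  | Arith aop nat nat nat
  | ReadS nat nat
  | ReadRank nat nat
  | ReadLCP nat nat
  | Load nat nat
  | Store nat nat
  | JumpIfZero nat nat
  | Jump nat
  | Halt

record cfg =
  pc :: nat
  regs :: "nat \<Rightarrow> nat"
  mem :: "nat \<Rightarrow> nat"
  space :: nat

datatype status = Running cfg | Done cfg | Fault

record env =
  len :: nat
  wbound :: nat
  sArr :: "nat \<Rightarrow> nat"
  rankArr :: "nat \<Rightarrow> nat"
  lcpArr :: "nat \<Rightarrow> nat"

fun eval_aop :: "aop \<Rightarrow> nat \<Rightarrow> nat \<Rightarrow> nat" where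
  "eval_aop Plus a b = a + b"
| "eval_aop Minus a b = a - b"
| "eval_aop Times a b = a * b"
| "eval_aop Divide a b = a div b"
| "eval_aop Modulo a b = a mod b"
| "eval_aop Less a b = (if a < b then 1 else 0)"
| "eval_aop Eq a b = (if a = b then 1 else 0)"

definition setreg :: "env \<Rightarrow> cfg \<Rightarrow> nat \<Rightarrow> nat \<Rightarrow> status" where
  "setreg E c r v = (if v < wbound E
      then Running (c\<lparr>pc := Suc (pc c), regs := (regs c)(r := v)\<rparr>) else Fault)"

definition readarr :: "env \<Rightarrow> cfg \<Rightarrow> (nat \<Rightarrow> nat) \<Rightarrow> nat \<Rightarrow> nat \<Rightarrow> nat \<Rightarrow> status" where
  "readarr E c A hi r a = (let i = regs c a in
      if 1 \<le> i \<and> i \<le> hi then setreg E c r (A i) else Fault)"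

fun exec_instr :: "env \<Rightarrow> cfg \<Rightarrow> instr \<Rightarrow> status" where
  "exec_instr E c (LoadConst r v) = setreg E c r v"
| "exec_instr E c (Arith f r a b) = setreg E c r (eval_aop f (regs c a) (regs c b))"
| "exec_instr E c (ReadS r a) = readarr E c (sArr E) (len E) r a"
| "exec_instr E c (ReadRank r a) = readarr E c (rankArr E) (len E) r a"
| "exec_instr E c (ReadLCP r a) = readarr E c (lcpArr E) (Suc (len E)) r a"
| "exec_instr E c (Load r a) =
     setreg E (c\<lparr>space := max (space c) (Suc (regs c a))\<rparr>) r (mem c (regs c a))"
| "exec_instr E c (Store a b) =
     Running (c\<lparr>pc := Suc (pc c), mem := (mem c)(regs c a := regs c b),
                space := max (space c) (Suc (regs c a))\<rparr>)"
| "exec_instr E c (JumpIfZero r l) =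
     Running (c\<lparr>pc := (if regs c r = 0 then l else Suc (pc c))\<rparr>)"
| "exec_instr E c (Jump l) = Running (c\<lparr>pc := l\<rparr>)"
| "exec_instr E c Halt = Done c"

definition step :: "instr list \<Rightarrow> env \<Rightarrow> cfg \<Rightarrow> status" where
  "step P E c = (if pc c < length P then exec_instr E c (P ! pc c) else Fault)"

fun run :: "instr list \<Rightarrow> env \<Rightarrow> nat \<Rightarrow> status \<Rightarrow> status" where
  "run P E 0 s = s"
| "run P E (Suc t) s = (case s of Running c \<Rightarrow> run P E t (step P E c) | _ \<Rightarrow> s)"

definition init_cfg :: "nat \<Rightarrow> nat \<Rightarrow> nat \<Rightarrow> cfg" where
  "init_cfg n x y = \<lparr>pc = 0, regs = (\<lambda>r. if r = 0 then n else if r = 1 then x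
                                          else if r = 2 then y else 0),
                     mem = (\<lambda>_. 0), space = 0\<rparr>"

definition result_of :: "cfg \<Rightarrow> (nat \<times> nat) option" where
  "result_of c = (if regs c 0 = 0 then None else Some (regs c 0, regs c 1))"

definition mk_env :: "nat list \<Rightarrow> nat \<Rightarrow> nat \<Rightarrow> (nat \<Rightarrow> nat) \<Rightarrow> (nat \<Rightarrow> nat) \<Rightarrow> env" where
  "mk_env S \<sigma> k Rank L = \<lparr>len = length S, wbound = (length S + \<sigma> + 2) ^ k,
                           sArr = (\<lambda>i. S ! (i - 1)), rankArr = Rank, lcpArr = L\<rparr>"

definition correct_answer :: "nat list \<Rightarrow> nat \<Rightarrow> nat \<Rightarrow> (nat \<times> nat) option \<Rightarrow> bool" where
  "correct_answer S x y out \<longleftrightarrow>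
     (case out of None \<Rightarrow> \<not> (\<exists>i j. is_LR S x y i j)
                | Some (i, j) \<Rightarrow> is_leftmost_LR S x y i j)"

end

theory Submission
  imports Defs
begin

definition Prog :: "instr list" where
"Prog = [LoadConst 6 1, LoadConst 3 1,
 Arith Less 7 1 3, JumpIfZero 7 5, Jump 24,
 ReadRank 8 3, ReadLCP 9 8, Arith Plus 10 8 6, ReadLCP 10 10,
 Arith Minus 10 10 9, Arith Plus 9 9 10, Arith Plus 11 3 9, Arith Less 11 2 11,
 Arith Less 13 4 9, Arith Times 11 11 13, Arith Minus 13 9 4, Arith Times 13 11 13,
 Arith Plus 4 4 13, Arith Minus 13 6 11, Arith Times 13 13 5, Arith Times 14 11 3,
 Arith Plus 5 13 14, Arith Plus 3 3 6, Jump 2,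
 JumpIfZero 4 29, Arith Plus 0 5 12, Arith Plus 1 5 4, Arith Minus 1 1 6, Halt,
 LoadConst 0 0, Halt]"

lemma run_num[simp]: "run P E (numeral w) (Running c) = run P E (pred_numeral w) (step P E c)"
  by (simp add: numeral_eq_Suc)

lemma run_Fault[simp]: "run P E t Fault = Fault" by (cases t) auto
lemma run_Done[simp]: "run P E t (Done c) = Done c" by (cases t) auto

definition hinv :: "nat \<Rightarrow> nat \<Rightarrow> cfg \<Rightarrow> nat \<Rightarrow> bool" where
"hinv x y c i \<longleftrightarrow> pc c = 2 \<and> regs c 1 = x \<and> regs c 2 = y \<and> regs c 3 = i \<and> regs c 6 = 1 \<and> regs c 12 = 0 \<and> space c = 0"

lemma iter:
  assumes h: "hinv x y c i" and "1 \<le> i" "i \<le> x" "x \<le> len E" "rankArr E i = r" "1 \<le> r" "r \<le> len E"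
   "lcpArr E r = a" "lcpArr E (Suc r) = b" "i + max a b \<le> Suc (len E)" "Suc (Suc (len E)) < wbound E"
   "regs c 4 \<le> len E" "regs c 5 \<le> len E"
  shows "\<exists>c'. run Prog E 21 (Running c) = Running c' \<and> hinv x y c' (Suc i) \<and>
     (regs c' 4, regs c' 5) = (if y < i + max a b \<and> regs c 4 < max a b then (max a b, i) else (regs c 4, regs c 5))"
proof -
  have ab: "a \<le> len E" "b \<le> len E" using assms by auto
  have W: "a < wbound E" "b < wbound E" "b - a < wbound E" "a - regs c 4 < wbound E"
    "b - regs c 4 < wbound E" "i < wbound E" "Suc i < wbound E" "i + a < wbound E" "i + b < wbound E"
    "Suc r < wbound E" "r < wbound E" "regs c 4 < wbound E" "regs c 5 < wbound E" "a + (b - a) < wbound E"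
    "i + (a + (b - a)) < wbound E"
    using assms ab by auto
  show ?thesis
  using assms ab W unfolding hinv_def
  apply (simp add: step_def Prog_def setreg_def readarr_def max_def split: if_split_asm)
  apply auto
  done
qed

lemma run_add: "run P E (a + b) s = run P E b (run P E a s)"
proof (induction a arbitrary: s)
  case 0 then show ?case by simp
next
  case (Suc a) then show ?case by (cases s) auto
qed

fun best :: "(nat \<Rightarrow> nat) \<Rightarrow> nat \<Rightarrow> nat \<Rightarrow> nat \<times> nat" where
  "best M y 0 = (0, 0)"
| "best M y (Suc k) = (if y < Suc k + M (Suc k) \<and> fst (best M y k) < M (Suc k)
      then (M (Suc k), Suc k) else best M y k)"

lemma best_bounds:
  assumes "\<forall>i. 1 \<le> i \<and> i \<le> k \<longrightarrow> i + M i \<le> Suc n"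
  shows "snd (best M y k) + fst (best M y k) \<le> Suc n \<and> snd (best M y k) \<le> k \<and>
         (fst (best M y k) = 0 \<or> 1 \<le> snd (best M y k))"
  using assms by (induction k) auto

lemma init_run:
  assumes "Suc 0 < wbound E"
  shows "\<exists>c1. run Prog E 2 (Running (init_cfg n x y)) = Running c1 \<and> hinv x y c1 1 \<and>
     regs c1 4 = 0 \<and> regs c1 5 = 0"
  using assms by (simp add: step_def Prog_def setreg_def init_cfg_def hinv_def)

lemma final_run:
  assumes "hinv x y c (Suc x)" "regs c 5 + regs c 4 \<le> Suc n" "Suc (Suc n) < wbound E"
    "regs c 4 \<noteq> 0 \<longrightarrow> 1 \<le> regs c 5"
  shows "\<exists>cf. run Prog E 8 (Running c) = Done cf \<and> space cf = 0 \<and>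
     result_of cf = (if regs c 4 = 0 then None else Some (regs c 5, regs c 5 + regs c 4 - 1))"
proof -
  have W: "regs c 5 < wbound E" "regs c 5 + regs c 4 < wbound E" "regs c 5 + regs c 4 - 1 < wbound E"
    "1 < wbound E" using assms by auto
  show ?thesis using assms W unfolding hinv_def
    apply (simp add: step_def Prog_def setreg_def result_of_def split: if_split_asm)
    apply auto
    done
qed

lemma loop_run:
  fixes E M
  defines "M \<equiv> (\<lambda>i. max (lcpArr E (rankArr E i)) (lcpArr E (Suc (rankArr E i))))"
  assumes c1: "hinv x y c1 1" "regs c1 4 = 0" "regs c1 5 = 0"
    and xn: "x \<le> len E" and Wb: "Suc (Suc (len E)) < wbound E"
    and rk: "\<forall>i. 1 \<le> i \<and> i \<le> x \<longrightarrow> 1 \<le> rankArr E i \<and> rankArr E i \<le> len E \<and> i + M i \<le> Suc (len E)"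
  shows "k \<le> x \<Longrightarrow> \<exists>c'. run Prog E (21 * k) (Running c1) = Running c' \<and> hinv x y c' (Suc k) \<and>
     (regs c' 4, regs c' 5) = best M y k"
proof (induction k)
  case 0 then show ?case using c1 by simp
next
  case (Suc k)
  then obtain c' where c': "run Prog E (21 * k) (Running c1) = Running c'" "hinv x y c' (Suc k)"
     "(regs c' 4, regs c' 5) = best M y k" by auto
  have bb: "snd (best M y k) + fst (best M y k) \<le> Suc (len E) \<and> snd (best M y k) \<le> k \<and>
         (fst (best M y k) = 0 \<or> 1 \<le> snd (best M y k))"
    by (rule best_bounds) (use rk Suc.prems in auto)
  have e: "regs c' 4 = fst (best M y k)" "regs c' 5 = snd (best M y k)" using c'(3) by (metis fst_conv snd_conv)+
  have r4: "regs c' 4 \<le> len E" "regs c' 5 \<le> len E" using bb e Suc.prems xn by auto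
  have rr: "1 \<le> rankArr E (Suc k)" "rankArr E (Suc k) \<le> len E" "Suc k + M (Suc k) \<le> Suc (len E)"
    using rk Suc.prems by auto
  obtain c'' where c'': "run Prog E 21 (Running c') = Running c''" "hinv x y c'' (Suc (Suc k))"
    "(regs c'' 4, regs c'' 5) = (if y < Suc k + M (Suc k) \<and> regs c' 4 < M (Suc k) then (M (Suc k), Suc k) else (regs c' 4, regs c' 5))"
    using iter[OF c'(2) _ _ _ refl rr(1) rr(2) refl refl] rr(3) r4 Suc.prems xn Wb
    unfolding M_def by auto
  have "21 * Suc k = 21 * k + 21" by simp
  then have "run Prog E (21 * Suc k) (Running c1) = Running c''" using c' c'' run_add by metis
  moreover have "(regs c'' 4, regs c'' 5) = best M y (Suc k)"
    using c''(3) c'(3) by (auto simp: prod_eq_iff)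
  ultimately show ?case using c'' by blast
qed



lemma lcp_le: "lcp u v \<le> length u" "lcp u v \<le> length v"
  by (induction u v rule: lcp.induct) auto

lemma lcp_sym: "lcp u v = lcp v u"
  by (induction u v rule: lcp.induct) auto

lemma lcp_ge_iff: "m \<le> lcp u v \<longleftrightarrow> m \<le> length u \<and> m \<le> length v \<and> take m u = take m v"
proof (induction u v arbitrary: m rule: lcp.induct)
  case (1 a u b v)
  then show ?case by (cases m) auto
next
  case ("2_1" v)
  then show ?case by (cases m) auto
next
  case ("2_2" v)
  then show ?case by (cases m) auto
qed

lemma lex3:
  "(u, v) \<in> lexord {(a, b). (a::nat) < b} \<Longrightarrow> (v, w) \<in> lexord {(a, b). a < b} \<Longrightarrow>
   lcp u w \<le> lcp u v \<and> lcp u w \<le> lcp v w"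
proof (induction u arbitrary: v w)
  case Nil
  then show ?case by simp
next
  case (Cons a u)
  obtain b v' where v: "v = b # v'" using Cons.prems(1) by (cases v) auto
  obtain c w' where w: "w = c # w'" using Cons.prems(2) v by (cases w) auto
  show ?case
  proof (cases "a = c")
    case False then show ?thesis using v w by simp
  next
    case True
    have "a \<le> b" "b \<le> c" using Cons.prems v w by (auto simp: lexord_cons_cons)
    then have ab: "a = b" "b = c" using True by auto
    then have "(u, v') \<in> lexord {(a, b). a < b}" "(v', w') \<in> lexord {(a, b). a < b}"
      using Cons.prems v w by (auto simp: lexord_cons_cons)
    then show ?thesis using Cons.IH v w ab by auto
  qed
qed

lemma best_inv:
  fixes M :: "nat \<Rightarrow> nat"
  assumes "k \<le> y"
  shows "(fst (best M y k) = 0 \<longleftrightarrow> (\<forall>i. 1 \<le> i \<and> i \<le> k \<longrightarrow> \<not> y < i + M i)) \<and>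
    (\<forall>i. 1 \<le> i \<and> i \<le> k \<and> y < i + M i \<longrightarrow> M i \<le> fst (best M y k)) \<and>
    (0 < fst (best M y k) \<longrightarrow> 1 \<le> snd (best M y k) \<and> snd (best M y k) \<le> k \<and>
       y < snd (best M y k) + M (snd (best M y k)) \<and> M (snd (best M y k)) = fst (best M y k) \<and>
       (\<forall>i. 1 \<le> i \<and> i < snd (best M y k) \<and> y < i + M i \<longrightarrow> M i < fst (best M y k)))"
  using assms
proof (induction k)
  case 0 then show ?case by simp
next
  case (Suc k)
  have IH: "(fst (best M y k) = 0 \<longleftrightarrow> (\<forall>i. 1 \<le> i \<and> i \<le> k \<longrightarrow> \<not> y < i + M i)) \<and>
    (\<forall>i. 1 \<le> i \<and> i \<le> k \<and> y < i + M i \<longrightarrow> M i \<le> fst (best M y k)) \<and>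
    (0 < fst (best M y k) \<longrightarrow> 1 \<le> snd (best M y k) \<and> snd (best M y k) \<le> k \<and>
       y < snd (best M y k) + M (snd (best M y k)) \<and> M (snd (best M y k)) = fst (best M y k) \<and>
       (\<forall>i. 1 \<le> i \<and> i < snd (best M y k) \<and> y < i + M i \<longrightarrow> M i < fst (best M y k)))"
    by (rule Suc.IH) (use Suc.prems in simp)
  show ?case
  proof (cases "y < Suc k + M (Suc k) \<and> fst (best M y k) < M (Suc k)")
    case True
    then have b: "best M y (Suc k) = (M (Suc k), Suc k)" by simp
    show ?thesis unfolding b fst_conv snd_conv
    proof (intro conjI)
      show "(M (Suc k) = 0) = (\<forall>i. 1 \<le> i \<and> i \<le> Suc k \<longrightarrow> \<not> y < i + M i)"
        using True by auto
      show "\<forall>i. 1 \<le> i \<and> i \<le> Suc k \<and> y < i + M i \<longrightarrow> M i \<le> M (Suc k)"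
        using True IH le_Suc_eq by fastforce
      show "0 < M (Suc k) \<longrightarrow> 1 \<le> Suc k \<and> Suc k \<le> Suc k \<and> y < Suc k + M (Suc k) \<and> M (Suc k) = M (Suc k) \<and>
        (\<forall>i. 1 \<le> i \<and> i < Suc k \<and> y < i + M i \<longrightarrow> M i < M (Suc k))"
        using True IH by fastforce
    qed
  next
    case False
    then have b: "best M y (Suc k) = best M y k" by (simp only: best.simps if_False)
    have v: "y < Suc k + M (Suc k) \<Longrightarrow> M (Suc k) \<le> fst (best M y k)" using False by auto
    have v0: "y < Suc k + M (Suc k) \<Longrightarrow> 0 < M (Suc k)" using Suc.prems by auto
    show ?thesis unfolding b
    proof (intro conjI)
      show "(fst (best M y k) = 0) = (\<forall>i. 1 \<le> i \<and> i \<le> Suc k \<longrightarrow> \<not> y < i + M i)"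
        using IH v v0 le_Suc_eq by (metis le_zero_eq not_gr_zero)
      show "\<forall>i. 1 \<le> i \<and> i \<le> Suc k \<and> y < i + M i \<longrightarrow> M i \<le> fst (best M y k)"
        using IH v le_Suc_eq by blast
      show "0 < fst (best M y k) \<longrightarrow> 1 \<le> snd (best M y k) \<and> snd (best M y k) \<le> Suc k \<and>
       y < snd (best M y k) + M (snd (best M y k)) \<and> M (snd (best M y k)) = fst (best M y k) \<and>
       (\<forall>i. 1 \<le> i \<and> i < snd (best M y k) \<and> y < i + M i \<longrightarrow> M i < fst (best M y k))"
        using IH le_SucI by blast
    qed
  qed
qed

context
  fixes S :: "nat list" and SA Rank L :: "nat \<Rightarrow> nat"
  assumes SA: "is_SA S SA" and RK: "is_rank_array S SA Rank" and LC: "is_lcp_array S SA L"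
begin

definition MM :: "nat \<Rightarrow> nat" where "MM i = max (L (Rank i)) (L (Suc (Rank i)))"

lemma SA_range: "r \<in> {1..length S} \<Longrightarrow> SA r \<in> {1..length S}"
  using SA unfolding is_SA_def bij_betw_def by auto

lemma SA_inj: "inj_on SA {1..length S}"
  using SA unfolding is_SA_def bij_betw_def by auto

lemma rank_props: "i \<in> {1..length S} \<Longrightarrow> Rank i \<in> {1..length S} \<and> SA (Rank i) = i"
proof -
  assume i: "i \<in> {1..length S}"
  then obtain j where j: "j \<in> {1..length S}" "SA j = i"
    using SA unfolding is_SA_def bij_betw_def by (metis imageE)
  then have "Rank i = j" using RK i unfolding is_rank_array_def by blast
  then show ?thesis using j by simp
qed

lemma suf_len: "length (suffix_at S i) = length S - (i - 1)"
  by (simp add: suffix_at_def)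

lemma Ldef: "r \<in> {2..length S} \<Longrightarrow> L r = lcp (suffix_at S (SA (r - 1))) (suffix_at S (SA r))"
  using LC unfolding is_lcp_array_def by blast

lemma lexSA: "1 \<le> a \<Longrightarrow> a < b \<Longrightarrow> b \<le> length S \<Longrightarrow>
   (suffix_at S (SA a), suffix_at S (SA b)) \<in> lexord {(a, b). a < b}"
  using SA unfolding is_SA_def lex_less_def by blast

lemma chain:
  assumes "1 \<le> r1" "r1 < r2" "r2 \<le> length S"
  shows "lcp (suffix_at S (SA r1)) (suffix_at S (SA r2)) \<le> L r2 \<and>
         lcp (suffix_at S (SA r1)) (suffix_at S (SA r2)) \<le> L (Suc r1)"
proof
  have L2: "L r2 = lcp (suffix_at S (SA (r2 - 1))) (suffix_at S (SA r2))"
    using Ldef assms by auto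
  show "lcp (suffix_at S (SA r1)) (suffix_at S (SA r2)) \<le> L r2"
  proof (cases "r1 = r2 - 1")
    case True then show ?thesis using L2 by simp
  next
    case False
    then have "r1 < r2 - 1" using assms by auto
    then show ?thesis using L2 lex3[OF lexSA[of r1 "r2 - 1"] lexSA[of "r2 - 1" r2]] assms by auto
  qed
  have L1: "L (Suc r1) = lcp (suffix_at S (SA r1)) (suffix_at S (SA (Suc r1)))"
    using Ldef[of "Suc r1"] assms by auto
  show "lcp (suffix_at S (SA r1)) (suffix_at S (SA r2)) \<le> L (Suc r1)"
  proof (cases "Suc r1 = r2")
    case True then show ?thesis using L1 by simp
  next
    case False
    then have "Suc r1 < r2" using assms by auto
    then show ?thesis using L1 lex3[OF lexSA[of r1 "Suc r1"] lexSA[of "Suc r1" r2]] assms by auto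
  qed
qed

lemma maxlcp:
  assumes i: "i \<in> {1..length S}" and p: "p \<in> {1..length S}" and "p \<noteq> i"
  shows "lcp (suffix_at S i) (suffix_at S p) \<le> MM i"
proof -
  have ri: "Rank i \<in> {1..length S}" "SA (Rank i) = i" using rank_props i by auto
  have rp: "Rank p \<in> {1..length S}" "SA (Rank p) = p" using rank_props p by auto
  have "Rank p \<noteq> Rank i" using ri rp assms by metis
  then consider "Rank p < Rank i" | "Rank i < Rank p" by linarith
  then show ?thesis
  proof cases
    case 1
    then have "lcp (suffix_at S p) (suffix_at S i) \<le> L (Rank i)"
      using chain[of "Rank p" "Rank i"] ri rp by auto
    then show ?thesis unfolding MM_def by (simp add: lcp_sym)
  next
    case 2
    then have "lcp (suffix_at S i) (suffix_at S p) \<le> L (Suc (Rank i))"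
      using chain[of "Rank i" "Rank p"] ri rp by auto
    then show ?thesis unfolding MM_def by simp
  qed
qed

lemma witness:
  assumes i: "i \<in> {1..length S}" and pos: "0 < MM i"
  shows "\<exists>p\<in>{1..length S}. p \<noteq> i \<and> lcp (suffix_at S i) (suffix_at S p) = MM i"
proof -
  have ri: "Rank i \<in> {1..length S}" "SA (Rank i) = i" using rank_props i by auto
  have L1: "L 1 = 0" "L (Suc (length S)) = 0" using LC unfolding is_lcp_array_def by auto
  consider "MM i = L (Rank i)" | "MM i = L (Suc (Rank i))" unfolding MM_def by linarith
  then show ?thesis
  proof cases
    case 1
    then have "Rank i \<noteq> 1" using pos L1 by auto
    then have r2: "Rank i \<in> {2..length S}" using ri by auto
    let ?p = "SA (Rank i - 1)"
    have rm: "Rank i - 1 \<in> {1..length S}" using r2 by auto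
    then have p: "?p \<in> {1..length S}" using SA_range by blast
    have ne: "Rank i - 1 \<noteq> Rank i" using r2 by auto
    have "?p \<noteq> SA (Rank i)" using inj_onD[OF SA_inj] rm ri(1) ne by blast
    then have "?p \<noteq> i" using ri(2) by simp
    moreover have "lcp (suffix_at S i) (suffix_at S ?p) = MM i"
      using 1 Ldef[OF r2] ri by (simp add: lcp_sym)
    ultimately show ?thesis using p by blast
  next
    case 2
    then have "Rank i \<noteq> length S" using pos L1 by auto
    then have r2: "Suc (Rank i) \<in> {2..length S}" using ri by auto
    let ?p = "SA (Suc (Rank i))"
    have p: "?p \<in> {1..length S}" using SA_range r2 by auto
    have rm: "Suc (Rank i) \<in> {1..length S}" using r2 by auto
    have "?p \<noteq> SA (Rank i)" using inj_onD[OF SA_inj] rm ri(1) by fastforce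
    then have "?p \<noteq> i" using ri(2) by simp
    moreover have "lcp (suffix_at S i) (suffix_at S ?p) = MM i"
      using 2 Ldef[OF r2] ri by simp
    ultimately show ?thesis using p by blast
  qed
qed

lemma Lbound:
  assumes i: "i \<in> {1..length S}"
  shows "L (Rank i) \<le> length S - (i - 1)" "L (Suc (Rank i)) \<le> length S - (i - 1)"
proof -
  have ri: "Rank i \<in> {1..length S}" "SA (Rank i) = i" using rank_props i by auto
  have L1: "L 1 = 0" "L (Suc (length S)) = 0" using LC unfolding is_lcp_array_def by auto
  show "L (Rank i) \<le> length S - (i - 1)"
  proof (cases "Rank i = 1")
    case True then show ?thesis using L1 by simp
  next
    case False
    then have "Rank i \<in> {2..length S}" using ri by auto
    then show ?thesis using Ldef ri lcp_le(2) suf_len by metis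
  qed
  show "L (Suc (Rank i)) \<le> length S - (i - 1)"
  proof (cases "Rank i = length S")
    case True then show ?thesis using L1 by simp
  next
    case False
    then have r2: "Suc (Rank i) \<in> {2..length S}" using ri by auto
    then show ?thesis using Ldef[OF r2] ri lcp_le(1) suf_len by (metis diff_Suc_1)
  qed
qed

lemma MM_bound: "i \<in> {1..length S} \<Longrightarrow> i + MM i \<le> Suc (length S)"
  using Lbound[of i] unfolding MM_def by auto

lemma repeat_iff:
  "is_repeat S i j \<longleftrightarrow> 1 \<le> i \<and> i \<le> j \<and> j \<le> length S \<and> Suc j - i \<le> MM i"
proof
  assume r: "is_repeat S i j"
  then obtain p where p: "p \<noteq> i" "occurs_at S (substr S i j) p" and ij: "1 \<le> i" "i \<le> j" "j \<le> length S"
    unfolding is_repeat_def by blast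
  have lw: "length (substr S i j) = Suc j - i" using ij by (simp add: substr_def)
  have p1: "1 \<le> p" "p + (Suc j - i) \<le> Suc (length S)"
    "take (Suc j - i) (suffix_at S p) = take (Suc j - i) (suffix_at S i)"
    using p(2) lw unfolding occurs_at_def substr_def suffix_at_def by auto
  have "Suc j - i \<le> lcp (suffix_at S i) (suffix_at S p)"
    unfolding lcp_ge_iff using p1 ij by (auto simp: suf_len)
  also have "\<dots> \<le> MM i" using maxlcp[of i p] p1 p ij by auto
  finally show "1 \<le> i \<and> i \<le> j \<and> j \<le> length S \<and> Suc j - i \<le> MM i" using ij by auto
next
  assume a: "1 \<le> i \<and> i \<le> j \<and> j \<le> length S \<and> Suc j - i \<le> MM i"
  have "0 < MM i" using a by auto
  then obtain p where p: "p \<in> {1..length S}" "p \<noteq> i" "lcp (suffix_at S i) (suffix_at S p) = MM i"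
    using witness[of i] a by auto
  have "Suc j - i \<le> lcp (suffix_at S i) (suffix_at S p)" using a p by auto
  then have t: "Suc j - i \<le> length S - (p - 1)" "take (Suc j - i) (suffix_at S i) = take (Suc j - i) (suffix_at S p)"
    unfolding lcp_ge_iff by (auto simp: suf_len)
  have lw: "length (substr S i j) = Suc j - i" using a by (auto simp: substr_def)
  have "occurs_at S (substr S i j) p"
    unfolding occurs_at_def using t p lw a by (auto simp: substr_def suffix_at_def)
  then show "is_repeat S i j" unfolding is_repeat_def using a p by blast
qed


lemma correct:
  assumes xy: "1 \<le> x" "x \<le> y" "y \<le> length S"
  shows "correct_answer S x y (if fst (best MM y x) = 0 then None
           else Some (snd (best MM y x), snd (best MM y x) + fst (best MM y x) - 1))"
proof -
  define bl where "bl = fst (best MM y x)"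
  define bi where "bi = snd (best MM y x)"
  have I: "(bl = 0 \<longleftrightarrow> (\<forall>i. 1 \<le> i \<and> i \<le> x \<longrightarrow> \<not> y < i + MM i)) \<and>
    (\<forall>i. 1 \<le> i \<and> i \<le> x \<and> y < i + MM i \<longrightarrow> MM i \<le> bl) \<and>
    (0 < bl \<longrightarrow> 1 \<le> bi \<and> bi \<le> x \<and> y < bi + MM bi \<and> MM bi = bl \<and>
       (\<forall>i. 1 \<le> i \<and> i < bi \<and> y < i + MM i \<longrightarrow> MM i < bl))"
    unfolding bl_def bi_def by (rule best_inv) (use xy in auto)
  have cov: "1 \<le> i \<and> i \<le> x \<and> y < i + MM i \<and> j - i + 1 \<le> MM i \<and> i \<le> j"
    if "is_repeat S i j" "covers i j x y" for i j
    using that repeat_iff[of i j] unfolding covers_def by auto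
  show ?thesis
  proof (cases "bl = 0")
    case True
    have "\<not> (\<exists>i j. is_LR S x y i j)"
    proof
      assume "\<exists>i j. is_LR S x y i j"
      then obtain i j where "is_repeat S i j" "covers i j x y" unfolding is_LR_def by blast
      then show False using cov I True by blast
    qed
    then show ?thesis using True unfolding correct_answer_def bl_def by simp
  next
    case False
    then have bl0: "0 < bl" by simp
    have b: "1 \<le> bi" "bi \<le> x" "y < bi + MM bi" "MM bi = bl"
      and lt: "\<forall>i. 1 \<le> i \<and> i < bi \<and> y < i + MM i \<longrightarrow> MM i < bl" using I bl0 by auto
    have bnd: "bi + MM bi \<le> Suc (length S)" using MM_bound[of bi] b xy by auto
    have rep: "is_repeat S bi (bi + bl - 1)" unfolding repeat_iff using b bnd bl0 by auto
    have cv: "covers bi (bi + bl - 1) x y" unfolding covers_def using b xy by auto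
    have mx: "\<forall>i' j'. is_repeat S i' j' \<and> covers i' j' x y \<longrightarrow> j' - i' \<le> (bi + bl - 1) - bi"
    proof (intro allI impI)
      fix i' j' assume h: "is_repeat S i' j' \<and> covers i' j' x y"
      then have "1 \<le> i' \<and> i' \<le> x \<and> y < i' + MM i' \<and> j' - i' + 1 \<le> MM i' \<and> i' \<le> j'" using cov by blast
      then have "MM i' \<le> bl" "j' - i' + 1 \<le> MM i'" using I by auto
      then show "j' - i' \<le> (bi + bl - 1) - bi" by linarith
    qed
    have LR: "is_LR S x y bi (bi + bl - 1)" unfolding is_LR_def using rep cv mx by blast
    have left: "\<forall>i' j'. is_LR S x y i' j' \<longrightarrow> bi \<le> i'"
    proof (intro allI impI)
      fix i' j' assume h: "is_LR S x y i' j'"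
      then have r: "is_repeat S i' j'" "covers i' j' x y" unfolding is_LR_def by auto
      have "(bi + bl - 1) - bi \<le> j' - i'" using h rep cv unfolding is_LR_def by blast
      moreover have c: "1 \<le> i' \<and> i' \<le> x \<and> y < i' + MM i' \<and> j' - i' + 1 \<le> MM i' \<and> i' \<le> j'"
        using cov r by blast
      ultimately have "bl \<le> MM i'" using bl0 by linarith
      then show "bi \<le> i'" using lt c by (meson leD not_le_imp_less)
    qed
    show ?thesis using False LR left unfolding correct_answer_def is_leftmost_LR_def bl_def bi_def
      by simp
  qed
qed

end



theorem lemma5:
  "\<exists>(P :: instr list) (c :: nat) (k :: nat).
     \<forall>(\<sigma> :: nat) (S :: nat list) (SA :: nat \<Rightarrow> nat) (Rank :: nat \<Rightarrow> nat) (L :: nat \<Rightarrow> nat) (x :: nat) (y :: nat).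
       set S \<subseteq> {1..\<sigma>} \<and> is_SA S SA \<and> is_rank_array S SA Rank \<and> is_lcp_array S SA L \<and>
       1 \<le> x \<and> x \<le> y \<and> y \<le> length S \<longrightarrow>
       (\<exists>cf. run P (mk_env S \<sigma> k Rank L) (c * x) (Running (init_cfg (length S) x y)) = Done cf \<and>
             space cf \<le> c * length S \<and>
             correct_answer S x y (result_of cf))"
proof (rule exI[of _ Prog], rule exI[of _ 32], rule exI[of _ 1], intro allI impI)
  fix \<sigma> S SA Rank L x y
  assume h: "set S \<subseteq> {1..\<sigma>} \<and> is_SA S SA \<and> is_rank_array S SA Rank \<and> is_lcp_array S SA L \<and>
       1 \<le> x \<and> x \<le> y \<and> y \<le> length S"
  then have SA: "is_SA S SA" and RK: "is_rank_array S SA Rank" and LC: "is_lcp_array S SA L"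
    and xy: "1 \<le> x" "x \<le> y" "y \<le> length S" and ss: "set S \<subseteq> {1..\<sigma>}" by auto
  define n where "n = length S"
  define E where "E = mk_env S \<sigma> 1 Rank L"
  have Sne: "S \<noteq> []" using xy by auto
  then have "hd S \<in> {1..\<sigma>}" using ss hd_in_set by blast
  then have sg: "1 \<le> \<sigma>" by auto
  have E: "len E = n" "wbound E = n + \<sigma> + 2" "rankArr E = Rank" "lcpArr E = L"
    unfolding E_def mk_env_def n_def by auto
  have Wb: "Suc (Suc (len E)) < wbound E" using E sg by simp
  define M where "M = (\<lambda>i. max (lcpArr E (rankArr E i)) (lcpArr E (Suc (rankArr E i))))"
  have MM: "M = MM Rank L" unfolding M_def E using MM_def[OF SA RK LC] by auto
  obtain c1 where c1: "run Prog E 2 (Running (init_cfg n x y)) = Running c1" "hinv x y c1 1"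
     "regs c1 4 = 0" "regs c1 5 = 0" using init_run[of E n x y] Wb by auto
  have rk: "\<forall>i. 1 \<le> i \<and> i \<le> x \<longrightarrow> 1 \<le> rankArr E i \<and> rankArr E i \<le> len E \<and> i + M i \<le> Suc (len E)"
  proof (intro allI impI)
    fix i assume i: "1 \<le> i \<and> i \<le> x"
    then have ii: "i \<in> {1..length S}" using xy by auto
    show "1 \<le> rankArr E i \<and> rankArr E i \<le> len E \<and> i + M i \<le> Suc (len E)"
      using rank_props[OF SA RK LC ii] MM_bound[OF SA RK LC ii] MM E n_def by auto
  qed
  have xn: "x \<le> len E" using xy E n_def by auto
  obtain c' where c': "run Prog E (21 * x) (Running c1) = Running c'" "hinv x y c' (Suc x)"
     "(regs c' 4, regs c' 5) = best M y x"
    using loop_run[OF c1(2) c1(3) c1(4) xn Wb, of x] rk unfolding M_def by auto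
  have e: "regs c' 4 = fst (best M y x)" "regs c' 5 = snd (best M y x)" using c'(3) by (metis fst_conv snd_conv)+
  have bb: "snd (best M y x) + fst (best M y x) \<le> Suc n \<and> snd (best M y x) \<le> x \<and>
         (fst (best M y x) = 0 \<or> 1 \<le> snd (best M y x))"
    by (rule best_bounds) (use rk E in auto)
  obtain cf where cf: "run Prog E 8 (Running c') = Done cf" "space cf = 0"
    "result_of cf = (if regs c' 4 = 0 then None else Some (regs c' 5, regs c' 5 + regs c' 4 - 1))"
    using final_run[OF c'(2), of n E] bb e Wb E by auto
  have "32 * x = 2 + 21 * x + 8 + (32 * x - (2 + 21 * x + 8))" using xy by simp
  then have run32: "run Prog E (32 * x) (Running (init_cfg n x y)) = Done cf"
    using c1(1) c'(1) cf(1) run_add by (metis run_Done)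
  have r: "result_of cf = (if fst (best M y x) = 0 then None
           else Some (snd (best M y x), snd (best M y x) + fst (best M y x) - 1))"
    using cf(3) e by simp
  have "correct_answer S x y (result_of cf)" unfolding r MM by (rule correct[OF SA RK LC xy])
  with run32 show "\<exists>cf. run Prog (mk_env S \<sigma> 1 Rank L) (32 * x) (Running (init_cfg (length S) x y)) = Done cf \<and>
             space cf \<le> 32 * length S \<and> correct_answer S x y (result_of cf)"
    using cf(2) unfolding E_def n_def by auto
qed


end
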